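(* Let $n\in\mathbb N$, $\alpha>0$, $1<p<\infty$ with $p\neq 2$, and $\frac1p+\frac1{p'}=1$. If $g\in\mathcal{H}^n_{p,\alpha}$ and $h\in\mathcal{H}^n_{p',\alpha}$ are both not identically zero, then \[ |\langle g,h\rangle_\alpha| < C_p^n\,\|g\|_{p,\alpha}\,\|h\|_{p',\alpha}. \]
   Context: For $\alpha>0$ and $n\in\mathbb N$, $\gamma^n_\alpha(dz)=(\alpha/\pi)^n e^{-\alpha|z|^2}\lambda^n(dz)$ on $\mathbb C^n$, with $\lambda^n$ Lebesgue measure. For $1\le p<\infty$, $\mathcal{H}^n_{p,\alpha}$ is the space of holomorphic $f$ on $\mathbb C^n$ with $\|f\|_{p,\alpha}:=\left(\int|f|^p\,d\gamma^n_{\alpha p/2}\right)^{1/p}<\infty$. $\langle f,g\rangle_\alpha=\int f\overline{g}\,d\gamma^n_\alpha$. The constant is $C_p=2\,p^{-1/p}\,(p')^{-1/p'}$. *)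

theory Defs
  imports "HOL-Analysis.Analysis"
begin

text \<open>Points of C^n are vectors z :: complex^'n, where n = CARD('n).
  The Euclidean norm on complex^'n is |z| = sqrt (sum_i |z_i|^2), and lborel on
  complex^'n is Lebesgue measure on C^n = R^(2n).\<close>

definition holomorphic_Cn :: "(complex^'n \<Rightarrow> complex) \<Rightarrow> bool" where
  "holomorphic_Cn f \<longleftrightarrow>
     (\<forall>z. \<exists>f'. (f has_derivative f') (at z) \<and> (\<forall>c v. f' (c *s v) = c * f' v))"

definition gauss_measure :: "real \<Rightarrow> (complex^'n) measure" where
  "gauss_measure \<alpha> = density lborel
     (\<lambda>z. ennreal ((\<alpha> / pi) ^ CARD('n) * exp (- \<alpha> * (norm z)\<^sup>2)))"

definition fock_space :: "real \<Rightarrow> real \<Rightarrow> (complex^'n \<Rightarrow> complex) set" where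
  "fock_space p \<alpha> = {f. holomorphic_Cn f \<and>
     integrable (gauss_measure (\<alpha> * p / 2)) (\<lambda>z. norm (f z) powr p)}"

definition fock_norm :: "real \<Rightarrow> real \<Rightarrow> (complex^'n \<Rightarrow> complex) \<Rightarrow> real" where
  "fock_norm p \<alpha> f =
     (integral\<^sup>L (gauss_measure (\<alpha> * p / 2)) (\<lambda>z. norm (f z) powr p)) powr (1 / p)"

definition fock_inner :: "real \<Rightarrow> (complex^'n \<Rightarrow> complex) \<Rightarrow> (complex^'n \<Rightarrow> complex) \<Rightarrow> complex" where
  "fock_inner \<alpha> f g = integral\<^sup>L (gauss_measure \<alpha>) (\<lambda>z. f z * cnj (g z))"

definition C_const :: "real \<Rightarrow> real \<Rightarrow> real" where
  "C_const p p' = 2 * p powr (- 1 / p) * p' powr (- 1 / p')"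

end

theory Submission
  imports Defs "HOL-Complex_Analysis.Cauchy_Integral_Formula"
begin


lemma Re_deriv_real:
  assumes "(f has_field_derivative D) (at (complex_of_real x))"
  shows "((\<lambda>x. Re (f (complex_of_real x))) has_real_derivative Re D) (at x)"
  using has_field_derivative_Re[OF has_vector_derivative_real_field[OF assms]] .

lemma re_holo_not_quadratic:
  assumes hol: "H holomorphic_on ball 0 r" and r: "r > 0"
    and eq: "\<And>t. t \<in> ball 0 r \<Longrightarrow> Re (H t) = c + \<beta> * (norm t)^2"
  shows "\<beta> = 0"
proof -
  define H1 where "H1 = deriv H"
  define H2 where "H2 = deriv H1"
  have h1: "H1 holomorphic_on ball 0 r" unfolding H1_def by (rule holomorphic_deriv[OF hol]) auto
  have d0: "(H has_field_derivative H1 s) (at s)" if "s \<in> ball 0 r" for s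
    unfolding H1_def using holomorphic_derivI[OF hol _ that] by auto
  have d1: "(H1 has_field_derivative H2 s) (at s)" if "s \<in> ball 0 r" for s
    unfolding H2_def using holomorphic_derivI[OF h1 _ that] by auto
  define k where "k s = H s + H (\<i> * s)" for s
  define k1 where "k1 s = H1 s + \<i> * H1 (\<i> * s)" for s
  have ib: "\<i> * s \<in> ball 0 r" if "s \<in> ball 0 r" for s
    using that by (simp add: norm_mult)
  have di: "((\<lambda>s. \<i> * s) has_field_derivative \<i>) (at s)" for s
    by (auto intro!: derivative_eq_intros)
  have dk: "(k has_field_derivative k1 s) (at s)" if s: "s \<in> ball 0 r" for s
  proof -
    have "((\<lambda>s. H (\<i> * s)) has_field_derivative H1 (\<i> * s) * \<i>) (at s)"
      using DERIV_chain2[OF d0[OF ib[OF s]] di] by simp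
    from DERIV_add[OF d0[OF s] this] show ?thesis
      unfolding k_def k1_def by (simp add: mult.commute)
  qed
  have dk1: "(k1 has_field_derivative (H2 s - H2 (\<i> * s))) (at s)" if s: "s \<in> ball 0 r" for s
  proof -
    have "((\<lambda>s. H1 (\<i> * s)) has_field_derivative H2 (\<i> * s) * \<i>) (at s)"
      using DERIV_chain2[OF d1[OF ib[OF s]] di] by simp
    then have D2: "((\<lambda>s. \<i> * H1 (\<i> * s)) has_field_derivative \<i> * (H2 (\<i> * s) * \<i>)) (at s)"
      by (rule DERIV_cmult)
    show ?thesis
    proof -
      have "H2 s + \<i> * (H2 (\<i> * s) * \<i>) = H2 s - H2 (\<i> * s)"
        by (simp add: algebra_simps)
      with DERIV_add[OF d1[OF s] D2] show ?thesis unfolding k1_def by (simp add: fun_eq_iff)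
    qed
  qed
  define I where "I = {-r<..<r::real}"
  have oI: "open I" unfolding I_def by simp
  have inI: "complex_of_real x \<in> ball 0 r" if "x \<in> I" for x
    using that by (auto simp: I_def)
  have reK: "Re (k (complex_of_real x)) = 2*c + 2*\<beta>*x^2" if "x \<in> I" for x
  proof -
    have "Re (k x) = Re (H x) + Re (H (\<i> * x))" by (simp add: k_def)
    also have "\<dots> = 2*c + 2*\<beta>*x^2"
      using eq[OF inI[OF that]] eq[OF ib[OF inI[OF that]]] by (simp add: norm_mult)
    finally show ?thesis .
  qed
  have rk1: "Re (k1 (complex_of_real x)) = 4*\<beta>*x" if x: "x \<in> I" for x
  proof -
    have A: "((\<lambda>x. Re (k (complex_of_real x))) has_real_derivative Re (k1 x)) (at x)"
      by (rule Re_deriv_real[OF dk[OF inI[OF x]]])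
    have B: "((\<lambda>x. 2*c + 2*\<beta>*x^2) has_real_derivative 4*\<beta>*x) (at x)"
      by (auto intro!: derivative_eq_intros)
    have B': "((\<lambda>x. Re (k (complex_of_real x))) has_real_derivative 4*\<beta>*x) (at x)"
      by (rule has_field_derivative_transform_within_open[OF B oI x]) (simp add: reK)
    show ?thesis using DERIV_unique[OF A B'] .
  qed
  have "0 \<in> I" using r by (simp add: I_def)
  have A: "((\<lambda>x. Re (k1 (complex_of_real x))) has_real_derivative Re (H2 0 - H2 (\<i> * 0))) (at 0)"
    using Re_deriv_real[OF dk1, of 0] r by simp
  have B: "((\<lambda>x. 4*\<beta>*x) has_real_derivative 4*\<beta>) (at 0)"
    by (auto intro!: derivative_eq_intros)
  have B': "((\<lambda>x. Re (k1 (complex_of_real x))) has_real_derivative 4*\<beta>) (at 0)"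
    by (rule has_field_derivative_transform_within_open[OF B oI \<open>0 \<in> I\<close>]) (simp add: rk1)
  from DERIV_unique[OF A B'] show ?thesis by simp
qed



lemma bl_smul: "bounded_linear (\<lambda>t::complex. t *s (e::complex^'n))"
proof -
  have "linear (\<lambda>t::complex. t *s e)"
  proof (rule linearI)
    fix b1 b2 :: complex show "(b1 + b2) *s e = b1 *s e + b2 *s e" by (simp add: vector_sadd_rdistrib)
  next
    fix r :: real and b :: complex show "(r *\<^sub>R b) *s e = r *\<^sub>R (b *s e)"
      by (simp add: vec_eq_iff)
  qed
  then show ?thesis using linear_conv_bounded_linear by blast
qed

lemma holo_cont: "holomorphic_Cn f \<Longrightarrow> continuous_on UNIV f"
  unfolding holomorphic_Cn_def
  by (meson continuous_at_imp_continuous_on has_derivative_continuous)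

lemma line_deriv:
  assumes "holomorphic_Cn g"
  shows "\<exists>D. ((\<lambda>t. g (z0 + t *s e)) has_field_derivative D) (at t)"
proof -
  obtain f' where f': "(g has_derivative f') (at (z0 + t *s e))" and lin: "\<And>c v. f' (c *s v) = c * f' v"
    using assms unfolding holomorphic_Cn_def by blast
  have "((\<lambda>t. z0 + t *s e) has_derivative (\<lambda>s. s *s e)) (at t)"
    using bounded_linear.has_derivative[OF bl_smul[of e], of "\<lambda>t. t" "\<lambda>t. t" "at t"]
    by (auto intro!: derivative_eq_intros)
  from diff_chain_at[OF this f'] have "((\<lambda>t. g (z0 + t *s e)) has_derivative (\<lambda>s. f' (s *s e))) (at t)"
    by (simp add: o_def)
  then have "((\<lambda>t. g (z0 + t *s e)) has_derivative (\<lambda>s. s * f' e)) (at t)"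
    by (simp add: lin)
  moreover have "(\<lambda>s. s * f' e) = (*) (f' e)" by (auto simp: fun_eq_iff mult.commute)
  ultimately have "((\<lambda>t. g (z0 + t *s e)) has_derivative (*) (f' e)) (at t)" by simp
  then show ?thesis unfolding has_field_derivative_def by blast
qed

lemma cmod_add_sq: "(cmod (a + t))^2 = (cmod a)^2 + 2 * Re (cnj a * t) + (cmod t)^2"
  unfolding cmod_power2 by (simp add: power2_eq_square algebra_simps)

lemma norm_sq_vec: "(norm (x::complex^'n))^2 = (\<Sum>i\<in>UNIV. (cmod (x$i))^2)"
  unfolding norm_vec_def L2_set_def by (simp add: sum_nonneg)

lemma norm_line_sq:
  "(norm (z0 + t *s axis k (1::complex) :: complex^'n))^2 = (norm z0)^2 + 2 * Re (cnj (z0$k) * t) + (cmod t)^2"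
proof -
  have "(norm (z0 + t *s axis k (1::complex)))^2 = (\<Sum>i\<in>UNIV. (cmod (z0$i))^2 + (if i = k then 2 * Re (cnj (z0$k) * t) + (cmod t)^2 else 0))"
    unfolding norm_sq_vec by (intro sum.cong refl) (auto simp: axis_def cmod_add_sq)
  also have "\<dots> = (norm z0)^2 + 2 * Re (cnj (z0$k) * t) + (cmod t)^2"
    by (simp add: sum.distrib norm_sq_vec)
  finally show ?thesis .
qed

lemma cont_near:
  assumes "continuous_on UNIV (f::complex \<Rightarrow> complex)"
  shows "\<exists>d>0. \<forall>t. cmod t < d \<longrightarrow> cmod (f t - f 0) < 1"
proof -
  have "isCont f 0" using assms continuous_on_eq_continuous_at by blast
  then obtain d where "d > 0" "\<forall>x'. dist x' 0 < d \<longrightarrow> dist (f x') (f 0) < 1"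
    unfolding continuous_at_eps_delta by (meson zero_less_one)
  then show ?thesis by (auto simp: dist_norm)
qed

lemma no_ratio:
  fixes g h :: "complex^'n \<Rightarrow> complex"
  assumes hg: "holomorphic_Cn g" and hh: "holomorphic_Cn h" and b: "\<beta> \<noteq> 0" and g0: "g z0 \<noteq> 0"
    and eqn: "\<And>z. g z \<noteq> 0 \<Longrightarrow> h z \<noteq> 0 \<and> p * ln (norm (g z)) - q * ln (norm (h z)) = \<beta> * (norm z)^2 + c"
  shows False
proof -
  define k where "k = (undefined::'n)"
  define e where "e = axis k (1::complex)"
  define u where "u t = g (z0 + t *s e) / g z0" for t
  define v where "v t = h (z0 + t *s e) / h z0" for t
  have h0: "h z0 \<noteq> 0" using eqn g0 by blast
  have uhol: "u holomorphic_on UNIV"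
    unfolding holomorphic_on_open[OF open_UNIV] u_def
    using line_deriv[OF hg] by (metis DERIV_cdivide)
  have vhol: "v holomorphic_on UNIV"
    unfolding holomorphic_on_open[OF open_UNIV] v_def
    using line_deriv[OF hh] by (metis DERIV_cdivide)
  obtain d1 where d1: "d1 > 0" "\<forall>t. cmod t < d1 \<longrightarrow> cmod (u t - u 0) < 1"
    using cont_near[OF holomorphic_on_imp_continuous_on[OF uhol]] by blast
  obtain d2 where d2: "d2 > 0" "\<forall>t. cmod t < d2 \<longrightarrow> cmod (v t - v 0) < 1"
    using cont_near[OF holomorphic_on_imp_continuous_on[OF vhol]] by blast
  have u0: "u 0 = 1" using g0 by (simp add: u_def)
  have v0: "v 0 = 1" using h0 by (simp add: v_def)
  define d where "d = min d1 d2"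
  have d: "d > 0" using d1 d2 by (simp add: d_def)
  have posre: "Re w > 0" if "cmod (w - 1) < 1" for w
  proof -
    have "\<bar>Re (w - 1)\<bar> < 1" using abs_Re_le_cmod[of "w - 1"] that by linarith
    then show ?thesis by simp
  qed
  have ur: "Re (u t) > 0" if "t \<in> ball 0 d" for t
    using posre d1 that u0 by (auto simp: d_def)
  have vr: "Re (v t) > 0" if "t \<in> ball 0 d" for t
    using posre d2 that v0 by (auto simp: d_def)
  define H where "H t = of_real p * Ln (u t) - of_real q * Ln (v t) - of_real (2*\<beta>) * cnj (z0$k) * t" for t
  have un: "u z \<notin> \<real>\<^sub>\<le>\<^sub>0" if "z \<in> ball 0 d" for z
    using ur[OF that] by (auto simp: complex_nonpos_Reals_iff)
  have vn: "v z \<notin> \<real>\<^sub>\<le>\<^sub>0" if "z \<in> ball 0 d" for z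
    using vr[OF that] by (auto simp: complex_nonpos_Reals_iff)
  have Hhol: "H holomorphic_on ball 0 d"
    unfolding H_def
    by (intro holomorphic_intros un vn holomorphic_on_subset[OF uhol] holomorphic_on_subset[OF vhol]) auto
  have HRe: "Re (H t) = (\<beta> * (norm z0)^2 + c - p * ln (cmod (g z0)) + q * ln (cmod (h z0))) + \<beta> * (cmod t)^2"
    if t: "t \<in> ball 0 d" for t
  proof -
    define z where "z = z0 + t *s e"
    have un: "u t \<noteq> 0" using ur[OF t] by auto
    then have gz: "g z \<noteq> 0" by (simp add: u_def z_def)
    from eqn[OF gz] have hz: "h z \<noteq> 0" and E: "p * ln (norm (g z)) - q * ln (norm (h z)) = \<beta> * (norm z)^2 + c" by auto
    have nz: "(norm z)^2 = (norm z0)^2 + 2 * Re (cnj (z0$k) * t) + (cmod t)^2"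
      unfolding z_def e_def by (rule norm_line_sq)
    have lu: "Re (Ln (u t)) = ln (cmod (g z)) - ln (cmod (g z0))"
      using un gz g0 by (simp add: Re_Ln u_def z_def[symmetric] norm_divide ln_div)
    have lv: "Re (Ln (v t)) = ln (cmod (h z)) - ln (cmod (h z0))"
      using hz h0 by (simp add: Re_Ln v_def z_def[symmetric] norm_divide ln_div)
    have "Re (H t) = p * Re (Ln (u t)) - q * Re (Ln (v t)) - 2 * \<beta> * Re (cnj (z0$k) * t)"
      by (simp add: H_def mult.assoc)
    also have "\<dots> = (p * ln (norm (g z)) - q * ln (norm (h z))) - p * ln (cmod (g z0)) + q * ln (cmod (h z0)) - 2 * \<beta> * Re (cnj (z0$k) * t)"
      by (simp add: lu lv algebra_simps)
    also have "\<dots> = (\<beta> * (norm z0)^2 + c - p * ln (cmod (g z0)) + q * ln (cmod (h z0))) + \<beta> * (cmod t)^2"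
      unfolding E nz by (simp add: algebra_simps)
    finally show ?thesis .
  qed
  from re_holo_not_quadratic[OF Hhol d HRe] b show False by simp
qed




lemma bern:
  fixes l t :: real
  assumes l: "0 < l" "l < 1" and t: "t > 0" "t \<noteq> 1"
  shows "t powr l < l * t + (1 - l)"
proof -
  define f where "f x = l * x + (1 - l) - x powr l" for x :: real
  define f' where "f' x = l - l * x powr (l - 1)" for x :: real
  have D: "(f has_real_derivative f' x) (at x)" if "x > 0" for x
    unfolding f_def f'_def using that
    by (auto intro!: derivative_eq_intros simp: algebra_simps)
  have f1: "f 1 = 0" by (simp add: f_def)
  show ?thesis
  proof (cases "t > 1")
    case True
    obtain z where z: "z > 1" "z < t" "f t - f 1 = (t - 1) * f' z"
      using MVT2[OF True, of f f'] D by force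
    have "z powr (l - 1) < 1"
      using powr_less_mono'[of z "l-1" 0] z l
      by (metis diff_less_0_iff_less powr_less_mono2_neg powr_one_eq_one zero_less_one)
    then have "f' z > 0" unfolding f'_def using l by (simp add: mult_strict_left_mono[of _ 1 l, simplified])
    then have "f t > 0" using z True f1 by simp
    then show ?thesis by (simp add: f_def)
  next
    case False
    then have tl: "t < 1" using t by simp
    obtain z where z: "z > t" "z < 1" "f 1 - f t = (1 - t) * f' z"
      using MVT2[OF tl, of f f'] D t by force
    have "z powr (l - 1) > 1"
      using z t l by (metis diff_less_0_iff_less powr_less_mono2_neg powr_one_eq_one order.strict_trans)
    then have "f' z < 0" unfolding f'_def using l by (simp add: mult_strict_left_mono[of 1 _ l, simplified])
    moreover have "(1 - t) * f' z < 0" using tl \<open>f' z < 0\<close> by (simp add: mult_pos_neg)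
    ultimately have "f t > 0" using z f1 by simp
    then show ?thesis by (simp add: f_def)
  qed
qed

lemma young_pos_strict:
  fixes x y p q :: real
  assumes p: "p > 1" and pq: "1/p + 1/q = 1" and x: "x > 0" and y: "y > 0"
    and ne: "x powr p \<noteq> y powr q"
  shows "x * y < x powr p / p + y powr q / q"
proof -
  have q: "q > 1" using p pq
  proof -
    have "1/q = 1 - 1/p" using pq by simp
    moreover have "0 < 1 - 1/p" "1 - 1/p < 1" using p by auto
    ultimately have "0 < 1/q" "1/q < 1" by auto
    then show ?thesis by (simp add: divide_less_eq)
  qed
  define l where "l = 1 / p"
  have l: "0 < l" "l < 1" using p by (auto simp: l_def)
  have ql: "1 / q = 1 - l" using pq by (simp add: l_def)
  define X where "X = x powr p"
  define Y where "Y = y powr q"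
  have X: "X > 0" and Y: "Y > 0" using x y by (auto simp: X_def Y_def)
  have xX: "x = X powr l" unfolding X_def l_def using x p by (simp add: powr_powr)
  have yY: "y = Y powr (1 - l)" unfolding Y_def ql[symmetric] using y q by (simp add: powr_powr)
  have t: "X / Y > 0" "X / Y \<noteq> 1" using X Y ne by (auto simp: X_def Y_def)
  have "x * y = Y * (X / Y) powr l"
    unfolding xX yY using X Y by (simp add: powr_divide powr_diff)
  also have "\<dots> < Y * (l * (X / Y) + (1 - l))"
    using bern[OF l t] Y by simp
  also have "\<dots> = l * X + (1 - l) * Y"
    using Y by (simp add: field_simps)
  also have "\<dots> = X / p + Y / q"
    by (metis ql l_def times_divide_eq_left mult_1 mult.commute)
  finally show ?thesis by (simp add: X_def Y_def)
qed

lemma young_strict: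
  fixes x y p q :: real
  assumes p: "p > 1" and pq: "1/p + 1/q = 1" and x: "x \<ge> 0" and y: "y \<ge> 0"
    and ne: "x powr p \<noteq> y powr q"
  shows "x * y < x powr p / p + y powr q / q"
proof -
  have q: "q > 1" using p pq
  proof -
    have "1/q = 1 - 1/p" using pq by simp
    moreover have "0 < 1 - 1/p" "1 - 1/p < 1" using p by auto
    ultimately have "0 < 1/q" "1/q < 1" by auto
    then show ?thesis by (simp add: divide_less_eq)
  qed
  show ?thesis
  proof (cases "x = 0 \<or> y = 0")
    case True
    then show ?thesis
    proof
      assume x0: "x = 0"
      then have "y powr q \<noteq> 0" using ne p by simp
      then have "y powr q / q > 0" using y q by (simp add: order_less_le)
      then show ?thesis using x0 p by simp
    next
      assume y0: "y = 0"
      then have "x powr p \<noteq> 0" using ne q by simp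
      then have "x powr p / p > 0" using x p by (simp add: order_less_le)
      then show ?thesis using y0 q by simp
    qed
  next
    case False
    then show ?thesis using young_pos_strict[OF p pq _ _ ne] x y by auto
  qed
qed

lemma young:
  fixes x y p q :: real
  assumes p: "p > 1" and pq: "1/p + 1/q = 1" and x: "x \<ge> 0" and y: "y \<ge> 0"
  shows "x * y \<le> x powr p / p + y powr q / q"
proof (cases "x powr p = y powr q")
  case True
  have q: "q > 1" using p pq
  proof -
    have "1/q = 1 - 1/p" using pq by simp
    moreover have "0 < 1 - 1/p" "1 - 1/p < 1" using p by auto
    ultimately have "0 < 1/q" "1/q < 1" by auto
    then show ?thesis by (simp add: divide_less_eq)
  qed
  define X where "X = x powr p"
  have xX: "x = X powr (1/p)" unfolding X_def using x p by (simp add: powr_powr)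
  have yY: "y = X powr (1/q)" unfolding X_def True using y q by (simp add: powr_powr)
  have "x * y = X powr (1/p + 1/q)" unfolding xX yY by (simp add: powr_add)
  also have "\<dots> = X" using pq by (simp add: X_def)
  also have "\<dots> = X * (1/p + 1/q)" using pq by simp
  also have "\<dots> = X / p + X / q" by (simp add: distrib_left)
  finally show ?thesis by (simp add: X_def True)
next
  case False
  then show ?thesis using young_strict[OF assms False] by simp
qed

lemma cont_int_pos:
  fixes f :: "'a::euclidean_space \<Rightarrow> real"
  assumes c: "continuous_on UNIV f" and nn: "\<And>x. f x \<ge> 0" and i: "integrable lborel f"
    and x0: "f x0 > 0"
  shows "integral\<^sup>L lborel f > 0"
proof -
  have ge: "integral\<^sup>L lborel f \<ge> 0" using nn by (simp add: integral_nonneg)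
  have "integral\<^sup>L lborel f \<noteq> 0"
  proof
    assume "integral\<^sup>L lborel f = 0"
    then have "AE x in lborel. f x = 0" using integral_nonneg_eq_0_iff_AE[OF i] nn by simp
    then have "AE x in lebesgue. x \<in> {x. f x = 0}" by (simp add: AE_completion)
    moreover have "closed {x. f x = 0}" using c by (intro closed_Collect_eq) auto
    ultimately have "x0 \<in> {x. f x = 0}" using mem_closed_if_AE_lebesgue by blast
    then show False using x0 by simp
  qed
  then show ?thesis using ge by simp
qed

lemma conj_gt1:
  fixes p q :: real
  assumes p: "p > 1" and pq: "1/p + 1/q = 1"
  shows "q > 1"
proof -
  have "1/q = 1 - 1/p" using pq by simp
  moreover have "0 < 1 - 1/p" "1 - 1/p < 1" using p by auto
  ultimately have "0 < 1/q" "1/q < 1" by auto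
  then show ?thesis by (simp add: divide_less_eq)
qed

lemma strict_holder:
  fixes F G :: "'a::euclidean_space \<Rightarrow> real"
  assumes p: "p > 1" and pq: "1/p + 1/q = 1"
    and cF: "continuous_on UNIV F" and cG: "continuous_on UNIV G"
    and nF: "\<And>z. F z \<ge> 0" and nG: "\<And>z. G z \<ge> 0"
    and iF: "integrable lborel (\<lambda>z. F z powr p)" and iG: "integrable lborel (\<lambda>z. G z powr q)"
    and F0: "F z1 > 0" and G0: "G z2 > 0"
    and nK: "\<And>K. K > 0 \<Longrightarrow> \<exists>z. F z powr p \<noteq> K * G z powr q"
  shows "integral\<^sup>L lborel (\<lambda>z. F z * G z)
           < (integral\<^sup>L lborel (\<lambda>z. F z powr p)) powr (1/p) * (integral\<^sup>L lborel (\<lambda>z. G z powr q)) powr (1/q)"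
proof -
  have q: "q > 1" using conj_gt1[OF p pq] .
  have cFp: "continuous_on UNIV (\<lambda>z. F z powr p)"
    using p nF by (intro continuous_on_powr' cF continuous_on_const) auto
  have cGq: "continuous_on UNIV (\<lambda>z. G z powr q)"
    using q nG by (intro continuous_on_powr' cG continuous_on_const) auto
  define IF where "IF = integral\<^sup>L lborel (\<lambda>z. F z powr p)"
  define IG where "IG = integral\<^sup>L lborel (\<lambda>z. G z powr q)"
  have IF: "IF > 0" unfolding IF_def
    by (rule cont_int_pos[OF cFp _ iF, of z1]) (use F0 in auto)
  have IG: "IG > 0" unfolding IG_def
    by (rule cont_int_pos[OF cGq _ iG, of z2]) (use G0 in auto)
  define A where "A = IF powr (1/p)"
  define B where "B = IG powr (1/q)"
  have A: "A > 0" and B: "B > 0" using IF IG by (auto simp: A_def B_def)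
  have Ap: "A powr p = IF" unfolding A_def using IF p by (simp add: powr_powr)
  have Bq: "B powr q = IG" unfolding B_def using IG q by (simp add: powr_powr)
  define a where "a z = F z / A" for z
  define b where "b z = G z / B" for z
  have na: "a z \<ge> 0" and nb: "b z \<ge> 0" for z using nF nG A B by (auto simp: a_def b_def)
  have ap: "a z powr p = F z powr p / IF" for z
    unfolding a_def using nF[of z] A by (simp add: powr_divide Ap)
  have bq: "b z powr q = G z powr q / IG" for z
    unfolding b_def using nG[of z] B by (simp add: powr_divide Bq)
  define S where "S z = a z powr p / p + b z powr q / q" for z
  define D where "D z = S z - a z * b z" for z
  have iS: "integrable lborel S"
    unfolding S_def ap bq using iF iG by auto
  have intS: "integral\<^sup>L lborel S = 1"
  proof -
    have "integral\<^sup>L lborel S = IF / IF / p + IG / IG / q"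
      unfolding S_def ap bq using iF iG by (simp add: IF_def IG_def)
    also have "\<dots> = 1" using IF IG pq by simp
    finally show ?thesis .
  qed
  have cab: "continuous_on UNIV (\<lambda>z. a z * b z)"
    unfolding a_def b_def using A B by (intro continuous_intros cF cG) auto
  have iab: "integrable lborel (\<lambda>z. a z * b z)"
  proof (rule Bochner_Integration.integrable_bound[OF iS])
    show "(\<lambda>z. a z * b z) \<in> borel_measurable lborel"
      using borel_measurable_continuous_onI[OF cab] by simp
    show "AE z in lborel. norm (a z * b z) \<le> norm (S z)"
    proof (rule AE_I2)
      fix z
      have "a z * b z \<le> S z" unfolding S_def by (rule young[OF p pq na nb])
      then show "norm (a z * b z) \<le> norm (S z)" using na[of z] nb[of z] by simp
    qed
  qed
  have iD: "integrable lborel D" unfolding D_def using iS iab by auto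
  have cD: "continuous_on UNIV D"
  proof -
    have c1: "continuous_on UNIV (\<lambda>z. a z powr p)" unfolding ap using IF by (intro continuous_on_divide cFp continuous_on_const) auto
    have c2: "continuous_on UNIV (\<lambda>z. b z powr q)" unfolding bq using IG by (intro continuous_on_divide cGq continuous_on_const) auto
    have c1': "continuous_on UNIV (\<lambda>z. a z powr p / p)" using continuous_on_divide[OF c1 continuous_on_const, of p] p by auto
    have c2': "continuous_on UNIV (\<lambda>z. b z powr q / q)" using continuous_on_divide[OF c2 continuous_on_const, of q] q by auto
    show ?thesis unfolding D_def S_def using continuous_on_diff[OF continuous_on_add[OF c1' c2'] cab] .
  qed
  obtain z where z: "F z powr p \<noteq> (IF / IG) * G z powr q" using nK[of "IF/IG"] IF IG by auto
  have "a z powr p \<noteq> b z powr q"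
  proof
    assume "a z powr p = b z powr q"
    then have "F z powr p = IF * (G z powr q / IG)" unfolding ap bq using IF by (simp add: field_simps)
    then show False using z by simp
  qed
  then have Dz: "D z > 0" unfolding D_def S_def using young_strict[OF p pq na nb] by simp
  have "integral\<^sup>L lborel D > 0"
    by (rule cont_int_pos[OF cD _ iD Dz]) (use young[OF p pq na nb] in \<open>auto simp: D_def S_def\<close>)
  have "integral\<^sup>L lborel (\<lambda>z. a z * b z) = integral\<^sup>L lborel (\<lambda>z. S z - D z)"
    by (simp add: D_def)
  also have "\<dots> = 1 - integral\<^sup>L lborel D" using iS iD intS by simp
  finally have ab1: "integral\<^sup>L lborel (\<lambda>z. a z * b z) < 1" using \<open>integral\<^sup>L lborel D > 0\<close> by simp
  have FG: "F z * G z = (A * B) * (a z * b z)" for z using A B by (simp add: a_def b_def)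
  have "integral\<^sup>L lborel (\<lambda>z. F z * G z) = (A * B) * integral\<^sup>L lborel (\<lambda>z. a z * b z)"
    unfolding FG by simp
  also have "\<dots> < A * B" using ab1 A B by simp
  finally show ?thesis by (simp add: A_def B_def IF_def IG_def)
qed




lemma gauss_integral:
  fixes f :: "complex^'n \<Rightarrow> 'b::{banach, second_countable_topology}"
  assumes b: "\<beta> > 0" and c: "continuous_on UNIV f"
  shows "integral\<^sup>L (gauss_measure \<beta>) f
          = integral\<^sup>L lborel (\<lambda>z. ((\<beta>/pi)^CARD('n) * exp (- \<beta> * (norm z)\<^sup>2)) *\<^sub>R f z)"
    and "integrable (gauss_measure \<beta>) f
          \<longleftrightarrow> integrable lborel (\<lambda>z. ((\<beta>/pi)^CARD('n) * exp (- \<beta> * (norm z)\<^sup>2)) *\<^sub>R f z)"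
proof -
  have fm: "f \<in> borel_measurable lborel" using borel_measurable_continuous_onI[OF c] by simp
  have wc: "continuous_on UNIV (\<lambda>z::complex^'n. (\<beta>/pi)^CARD('n) * exp (- \<beta> * (norm z)\<^sup>2))"
    by (intro continuous_intros)
  have wm: "(\<lambda>z::complex^'n. (\<beta>/pi)^CARD('n) * exp (- \<beta> * (norm z)\<^sup>2)) \<in> borel_measurable lborel"
    using borel_measurable_continuous_onI[OF wc] by simp
  have wn: "AE z in lborel. 0 \<le> (\<beta>/pi)^CARD('n) * exp (- \<beta> * (norm (z::complex^'n))\<^sup>2)"
    using b by simp
  show "integral\<^sup>L (gauss_measure \<beta>) f
          = integral\<^sup>L lborel (\<lambda>z. ((\<beta>/pi)^CARD('n) * exp (- \<beta> * (norm z)\<^sup>2)) *\<^sub>R f z)"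
    unfolding gauss_measure_def by (rule integral_density[OF fm wm wn])
  show "integrable (gauss_measure \<beta>) f
          \<longleftrightarrow> integrable lborel (\<lambda>z. ((\<beta>/pi)^CARD('n) * exp (- \<beta> * (norm z)\<^sup>2)) *\<^sub>R f z)"
    unfolding gauss_measure_def by (rule integrable_density[OF fm wm wn])
qed

lemma powr_pow_swap: "x > 0 \<Longrightarrow> ((x::real) ^ n) powr r = (x powr r) ^ n"
  by (simp add: powr_realpow[symmetric] powr_powr mult.commute)

lemma fock_norm_eq:
  fixes g :: "complex^'n \<Rightarrow> complex"
  assumes a: "\<alpha> > 0" and p: "p > 0" and hg: "holomorphic_Cn g"
  defines "F \<equiv> \<lambda>z. norm (g z) * exp (- \<alpha> * (norm z)\<^sup>2 / 2)"
  shows "integrable (gauss_measure (\<alpha> * p / 2)) (\<lambda>z. norm (g z) powr p)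
           \<longleftrightarrow> integrable lborel (\<lambda>z. F z powr p)"
    and "fock_norm p \<alpha> g = ((\<alpha> * p / 2 / pi) powr (1/p)) ^ CARD('n)
           * (integral\<^sup>L lborel (\<lambda>z. F z powr p)) powr (1/p)"
proof -
  define c where "c = (\<alpha> * p / 2 / pi) ^ CARD('n)"
  have c: "c > 0" using a p by (simp add: c_def)
  have cg: "continuous_on UNIV g" using holo_cont[OF hg] .
  have cf: "continuous_on UNIV (\<lambda>z. norm (g z) powr p)"
    using p by (intro continuous_on_powr' continuous_intros cg) auto
  have eq: "((\<alpha> * p / 2 / pi)^CARD('n) * exp (- (\<alpha> * p / 2) * (norm z)\<^sup>2)) *\<^sub>R (norm (g z) powr p)
        = c * F z powr p" for z
  proof -
    have "F z powr p = norm (g z) powr p * exp (- \<alpha> * (norm z)\<^sup>2 / 2) powr p"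
      unfolding F_def by (simp add: powr_mult)
    also have "\<dots> = norm (g z) powr p * exp (- (\<alpha> * p / 2) * (norm z)\<^sup>2)"
      by (simp add: exp_powr_real algebra_simps)
    finally show ?thesis by (simp add: c_def)
  qed
  have ap: "\<alpha> * p / 2 > 0" using a p by simp
  show "integrable (gauss_measure (\<alpha> * p / 2)) (\<lambda>z. norm (g z) powr p)
           \<longleftrightarrow> integrable lborel (\<lambda>z. F z powr p)"
    unfolding gauss_integral(2)[OF ap cf] eq using c by simp
  have "fock_norm p \<alpha> g = (c * integral\<^sup>L lborel (\<lambda>z. F z powr p)) powr (1/p)"
    unfolding fock_norm_def gauss_integral(1)[OF ap cf] eq by simp
  also have "\<dots> = c powr (1/p) * (integral\<^sup>L lborel (\<lambda>z. F z powr p)) powr (1/p)"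
    using c by (simp add: powr_mult integral_nonneg)
  also have "c powr (1/p) = ((\<alpha> * p / 2 / pi) powr (1/p)) ^ CARD('n)"
    unfolding c_def using ap by (simp add: powr_pow_swap)
  finally show "fock_norm p \<alpha> g = ((\<alpha> * p / 2 / pi) powr (1/p)) ^ CARD('n)
           * (integral\<^sup>L lborel (\<lambda>z. F z powr p)) powr (1/p)" .
qed

theorem theorem1p4:
  fixes g h :: "complex^'n \<Rightarrow> complex" and \<alpha> p p' :: real
  assumes "\<alpha> > 0" and "1 < p" and "p \<noteq> 2" and "1 / p + 1 / p' = 1"
    and "g \<in> fock_space p \<alpha>" and "h \<in> fock_space p' \<alpha>"
    and "\<exists>z. g z \<noteq> 0" and "\<exists>z. h z \<noteq> 0"
  shows "norm (fock_inner \<alpha> g h)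
           < C_const p p' ^ CARD('n) * fock_norm p \<alpha> g * fock_norm p' \<alpha> h"
proof -
  note a = assms(1) and p = assms(2) and p2 = assms(3) and pq = assms(4)
  define q where "q = p'"
  have pq': "1/p + 1/q = 1" using pq by (simp add: q_def)
  have q: "q > 1" using conj_gt1[OF p pq'] .
  have hg: "holomorphic_Cn g" and ig: "integrable (gauss_measure (\<alpha> * p / 2)) (\<lambda>z. norm (g z) powr p)"
    using assms(5) by (auto simp: fock_space_def)
  have hh: "holomorphic_Cn h" and ih: "integrable (gauss_measure (\<alpha> * q / 2)) (\<lambda>z. norm (h z) powr q)"
    using assms(6) by (auto simp: fock_space_def q_def)
  obtain z1 where z1: "g z1 \<noteq> 0" using assms(7) by blast
  obtain z2 where z2: "h z2 \<noteq> 0" using assms(8) by blast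
  have cg: "continuous_on UNIV g" using holo_cont[OF hg] .
  have ch: "continuous_on UNIV h" using holo_cont[OF hh] .
  define E where "E z = exp (- \<alpha> * (norm z)\<^sup>2 / 2)" for z :: "complex^'n"
  define F where "F z = norm (g z) * E z" for z
  define G where "G z = norm (h z) * E z" for z
  have Fdef: "F = (\<lambda>z. norm (g z) * exp (- \<alpha> * (norm z)\<^sup>2 / 2))" by (simp add: F_def E_def fun_eq_iff)
  have Gdef: "G = (\<lambda>z. norm (h z) * exp (- \<alpha> * (norm z)\<^sup>2 / 2))" by (simp add: G_def E_def fun_eq_iff)
  have iF: "integrable lborel (\<lambda>z. F z powr p)"
    using fock_norm_eq(1)[OF a _ hg, of p] p ig unfolding Fdef by simp
  have iG: "integrable lborel (\<lambda>z. G z powr q)"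
    using fock_norm_eq(1)[OF a _ hh, of q] q ih unfolding Gdef by simp
  define A where "A = (integral\<^sup>L lborel (\<lambda>z. F z powr p)) powr (1/p)"
  define B where "B = (integral\<^sup>L lborel (\<lambda>z. G z powr q)) powr (1/q)"
  define Xp where "Xp = (\<alpha> * p / 2 / pi) powr (1/p)"
  define Xq where "Xq = (\<alpha> * q / 2 / pi) powr (1/q)"
  have ng: "fock_norm p \<alpha> g = Xp ^ CARD('n) * A"
    unfolding A_def Xp_def F_def E_def using fock_norm_eq(2)[OF a _ hg, of p] p by simp
  have nh: "fock_norm p' \<alpha> h = Xq ^ CARD('n) * B"
    unfolding B_def Xq_def G_def E_def using fock_norm_eq(2)[OF a _ hh, of q] q by (simp add: q_def)
  have cE: "continuous_on UNIV E" unfolding E_def by (intro continuous_intros) auto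
  have cF: "continuous_on UNIV F" unfolding F_def by (intro continuous_intros cg cE)
  have cG: "continuous_on UNIV G" unfolding G_def by (intro continuous_intros ch cE)
  have Epos: "E z > 0" for z by (simp add: E_def)
  have nF: "F z \<ge> 0" and nG: "G z \<ge> 0" for z using Epos[of z] by (auto simp: F_def G_def)
  have F0: "F z1 > 0" using z1 Epos[of z1] by (simp add: F_def)
  have G0: "G z2 > 0" using z2 Epos[of z2] by (simp add: G_def)
  have pneq: "p \<noteq> q"
  proof
    assume "p = q"
    then have "2 / p = 1" using pq' by simp
    then show False using p2 p by (simp add: divide_eq_1_iff)
  qed
  have nK: "\<exists>z. F z powr p \<noteq> K * G z powr q" if K: "K > 0" for K
  proof (rule ccontr)
    assume "\<not> ?thesis"
    then have eqK: "F z powr p = K * G z powr q" for z by simp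
    define \<beta> where "\<beta> = \<alpha> * (p - q) / 2"
    have b: "\<beta> \<noteq> 0" using a pneq by (simp add: \<beta>_def)
    show False
    proof (rule no_ratio[OF hg hh b z1])
      fix z assume gz: "g z \<noteq> 0"
      have Fz: "F z > 0" using gz Epos[of z] by (simp add: F_def)
      then have "F z powr p > 0" by simp
      then have "K * G z powr q > 0" using eqK[of z] by simp
      then have "G z \<noteq> 0" by auto
      then have hz: "h z \<noteq> 0" and Gz: "G z > 0" using nG[of z] Epos[of z] by (auto simp: G_def)
      have "ln (F z powr p) = ln (K * G z powr q)" using eqK[of z] by simp
      then have e1: "p * ln (F z) = ln K + q * ln (G z)" using Fz Gz K by (simp add: ln_powr ln_mult)
      have e2: "ln (F z) = ln (norm (g z)) - \<alpha> * (norm z)\<^sup>2 / 2"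
        using gz by (simp add: F_def E_def ln_mult)
      have e3: "ln (G z) = ln (norm (h z)) - \<alpha> * (norm z)\<^sup>2 / 2"
        using hz by (simp add: G_def E_def ln_mult)
      have "p * ln (norm (g z)) - q * ln (norm (h z)) = (p * ln (F z) - q * ln (G z)) + (p - q) * (\<alpha> * (norm z)\<^sup>2 / 2)"
        unfolding e2 e3 by (simp add: field_simps)
      also have "\<dots> = ln K + (p - q) * (\<alpha> * (norm z)\<^sup>2 / 2)" using e1 by simp
      also have "(p - q) * (\<alpha> * (norm z)\<^sup>2 / 2) = \<beta> * (norm z)\<^sup>2" by (simp add: \<beta>_def)
      finally have "p * ln (norm (g z)) - q * ln (norm (h z)) = \<beta> * (norm z)\<^sup>2 + ln K" by simp
      then show "h z \<noteq> 0 \<and> p * ln (norm (g z)) - q * ln (norm (h z)) = \<beta> * (norm z)\<^sup>2 + ln K"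
        using hz by simp
    qed
  qed
  have strict: "integral\<^sup>L lborel (\<lambda>z. F z * G z) < A * B"
    unfolding A_def B_def
    by (rule strict_holder[OF p pq' cF cG nF nG iF iG F0 G0 nK])
  have cgh: "continuous_on UNIV (\<lambda>z. g z * cnj (h z))" by (intro continuous_intros cg ch)
  have inner: "norm (fock_inner \<alpha> g h) \<le> (\<alpha>/pi)^CARD('n) * integral\<^sup>L lborel (\<lambda>z. F z * G z)"
  proof -
    have "norm (fock_inner \<alpha> g h)
      = norm (integral\<^sup>L lborel (\<lambda>z. ((\<alpha>/pi)^CARD('n) * exp (- \<alpha> * (norm z)\<^sup>2)) *\<^sub>R (g z * cnj (h z))))"
      unfolding fock_inner_def gauss_integral(1)[OF a cgh] ..
    also have "\<dots> \<le> integral\<^sup>L lborel (\<lambda>z. norm (((\<alpha>/pi)^CARD('n) * exp (- \<alpha> * (norm z)\<^sup>2)) *\<^sub>R (g z * cnj (h z))))"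
      by (rule integral_norm_bound)
    also have "\<dots> = integral\<^sup>L lborel (\<lambda>z. (\<alpha>/pi)^CARD('n) * (F z * G z))"
    proof (rule Bochner_Integration.integral_cong[OF refl])
      fix z
      have ee: "exp (- (\<alpha> * (norm z)\<^sup>2)) = E z * E z" unfolding E_def mult_exp_exp by simp
      show "norm (((\<alpha>/pi)^CARD('n) * exp (- \<alpha> * (norm z)\<^sup>2)) *\<^sub>R (g z * cnj (h z))) = (\<alpha>/pi)^CARD('n) * (F z * G z)"
        using a by (simp add: ee F_def G_def norm_mult abs_mult algebra_simps)
    qed
    also have "\<dots> = (\<alpha>/pi)^CARD('n) * integral\<^sup>L lborel (\<lambda>z. F z * G z)" by simp
    finally show ?thesis .
  qed
  have const: "C_const p p' ^ CARD('n) * Xp ^ CARD('n) * Xq ^ CARD('n) = (\<alpha>/pi)^CARD('n)"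
  proof -
    define r where "r = \<alpha> / (2 * pi)"
    have r: "r > 0" using a by (simp add: r_def)
    have "Xp = r powr (1/p) * p powr (1/p)" unfolding Xp_def r_def using a p
      by (simp add: powr_mult[symmetric] field_simps)
    moreover have "Xq = r powr (1/q) * q powr (1/q)" unfolding Xq_def r_def using a q
      by (simp add: powr_mult[symmetric] field_simps)
    ultimately have "C_const p p' * Xp * Xq
       = 2 * (r powr (1/p) * r powr (1/q)) * (p powr (- 1 / p) * p powr (1/p)) * (q powr (- 1 / q) * q powr (1/q))"
      unfolding C_const_def q_def by (simp add: algebra_simps)
    also have "\<dots> = 2 * r"
      using p q pq' r by (simp add: powr_add[symmetric])
    also have "\<dots> = \<alpha> / pi" by (simp add: r_def)
    finally show ?thesis by (simp add: power_mult_distrib[symmetric])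
  qed
  have "norm (fock_inner \<alpha> g h) < (\<alpha>/pi)^CARD('n) * (A * B)"
    using inner strict a by (smt (verit) mult_strict_left_mono zero_less_divide_iff pi_gt_zero zero_less_power)
  also have "\<dots> = C_const p p' ^ CARD('n) * fock_norm p \<alpha> g * fock_norm p' \<alpha> h"
    unfolding ng nh const[symmetric] by (simp add: algebra_simps)
  finally show ?thesis .
qed


end
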